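(* Assume Condition C1. Then $$\lim_{k\to\infty}k\cdot\mathbb E\Big[\prod_{i=0}^{k-1}\frac{S_i(W_0')}{S_i(W_0')+\lambda^*}\Big]=0,$$ where $W_0'\sim\mu$ is independent of $W_1',W_2',\dots$ used in the companion process.
   Context: Let $w^*>0$, $\mu$ a Borel probability measure on $[0,w^*]$, $h:[0,w^*]\to[0,\infty)$ and $g:[0,w^*]^2\to[0,\infty)$ bounded measurable. Companion process: for $w\in[0,w^*]$ and i.i.d. $\mu$-distributed $W_1',W_2',\dots$, $S_0(w)=h(w)$, $S_{i+1}(w)=S_i(w)+g(w,W'_{i+1})$. With $W\sim\mu$: $\tilde g(x)=\mathbb E[g(x,W)]$ and $\tilde g^*=\mathbb E[\sup_x g(x,W)]$. Condition C1: there is $\lambda^*>\tilde g^*$ with $\mathbb E\big[\frac{h(W)}{\lambda^*-\tilde g(W)}\big]=1$. *)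

theory Defs
  imports "HOL-Probability.Probability"
begin

text \<open>Companion process: S_i(w) = h(w) + sum_{j=1..i} g(w, W'_j), where the
  sequence W' is given as a function nat => real (W' 0 is unused here).\<close>
definition companion :: "(real \<Rightarrow> real) \<Rightarrow> (real \<Rightarrow> real \<Rightarrow> real) \<Rightarrow> real \<Rightarrow> (nat \<Rightarrow> real) \<Rightarrow> nat \<Rightarrow> real"
  where "companion h g w W' i = h w + (\<Sum>j\<in>{1..i}. g w (W' j))"

definition gtilde :: "real measure \<Rightarrow> (real \<Rightarrow> real \<Rightarrow> real) \<Rightarrow> real \<Rightarrow> real"
  where "gtilde \<mu> g x = (\<integral>w. g x w \<partial>\<mu>)"

definition gtilde_star :: "real measure \<Rightarrow> (real \<Rightarrow> real \<Rightarrow> real) \<Rightarrow> real \<Rightarrow> real"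
  where "gtilde_star \<mu> g wstar = (\<integral>w. (SUP x\<in>{0..wstar}. g x w) \<partial>\<mu>)"

end

theory Submission imports Defs "HOL-Real_Asymp.Real_Asymp" begin

lemma psi_mono: "1 \<le> (a::real) \<Longrightarrow> a \<le> b \<Longrightarrow> a * ln a \<le> b * ln b"
  by (intro mult_mono) auto

lemma ln_bound:
  fixes t X B' :: real
  assumes "1 \<le> t" "0 \<le> X" "X \<le> B'"
  shows "(t + X) * ln (t + X) \<le> t * ln t + X * (ln t + 1) + B'^2"
proof -
  have "ln (t + X) = ln t + ln (1 + X / t)"
  proof -
    have "t + X = t * (1 + X / t)" using assms by (simp add: field_simps)
    moreover have "0 < 1 + X / t" using assms by (simp add: add_pos_nonneg)
    ultimately show ?thesis using assms by (simp add: ln_mult)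
  qed
  also have "ln (1 + X / t) \<le> X / t"
    using assms by (intro ln_add_one_self_le_self) auto
  finally have l: "ln (t + X) \<le> ln t + X / t" by simp
  have "(t + X) * ln (t + X) \<le> (t + X) * (ln t + X / t)"
    using l assms by (intro mult_left_mono) auto
  also have "\<dots> = t * ln t + X * (ln t + 1) + X^2 / t"
    using assms by (simp add: field_simps power2_eq_square)
  also have "X^2 / t \<le> X^2"
    using assms by (simp add: divide_le_eq mult_le_cancel_left1)
  also have "X^2 \<le> B'^2" using assms by (intro power_mono) auto
  finally show ?thesis by simp
qed

lemma step_real_ineq:
  fixes t s lam mX B' \<delta> :: real
  assumes "0 < \<delta>" "0 < lam" "mX \<le> lam - \<delta>" "0 \<le> mX"
    "exp ((lam + B'^2) / \<delta>) \<le> t" "0 \<le> s" "s \<le> t"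
  shows "s / (s + lam) * (t * ln t + B'^2 + mX * (ln t + 1)) \<le> t * ln t"
proof -
  have t1: "1 \<le> t" using assms(5) by (meson dual_order.trans one_le_exp_iff assms(1,2) divide_nonneg_pos add_nonneg_nonneg zero_le_power2 less_imp_le)
  have lnt: "(lam + B'^2) / \<delta> \<le> ln t"
    using assms(5) t1 by (metis exp_le_cancel_iff exp_ln less_le_trans zero_less_one)
  then have "lam + B'^2 \<le> \<delta> * ln t" using assms(1) by (simp add: divide_le_eq mult.commute)
  moreover have "\<delta> * ln t \<le> (lam - mX) * ln t"
    using assms t1 by (intro mult_right_mono) auto
  ultimately have key: "mX * (ln t + 1) + B'^2 \<le> lam * ln t"
    using assms by (simp add: algebra_simps)
  have Q: "0 \<le> t * ln t + B'^2 + mX * (ln t + 1)" using t1 assms by simp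
  have "s / (s + lam) \<le> t / (t + lam)"
    using assms by (simp add: divide_simps) (simp add: algebra_simps mult_left_mono)
  then have "s / (s + lam) * (t * ln t + B'^2 + mX * (ln t + 1)) \<le> t / (t + lam) * (t * ln t + B'^2 + mX * (ln t + 1))"
    using Q by (intro mult_right_mono) auto
  also have "\<dots> \<le> t / (t + lam) * ((t + lam) * ln t)"
    using key t1 assms by (intro mult_left_mono) (auto simp: algebra_simps)
  also have "\<dots> = t * ln t" using t1 assms by simp
  finally show ?thesis .
qed

lemma step_nn:
  fixes M :: "'a measure" and X :: "'a \<Rightarrow> real"
  assumes P: "prob_space M" and Xm: "X \<in> borel_measurable M"
    and Xb: "\<And>y. y \<in> space M \<Longrightarrow> 0 \<le> X y \<and> X y \<le> B'"
    and mX: "integral\<^sup>L M X \<le> lam - \<delta>" and d: "0 < \<delta>" and l: "0 < lam"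
    and t: "exp ((lam + B'^2) / \<delta>) \<le> t" and s: "0 \<le> s" "s \<le> t"
  shows "(\<integral>\<^sup>+y. ennreal (s / (s + lam) * ((t + X y) * ln (t + X y))) \<partial>M) \<le> ennreal (t * ln t)"
proof -
  interpret prob_space M by (rule P)
  have t1: "1 \<le> t" using t d l
    by (meson dual_order.trans one_le_exp_iff divide_nonneg_pos add_nonneg_nonneg zero_le_power2 less_imp_le)
  have intX: "integrable M X"
    using Xb Xm by (intro integrable_const_bound[where B=B']) (auto intro!: AE_I2)
  have mX0: "0 \<le> integral\<^sup>L M X" using Xb by (intro integral_nonneg_AE) (auto intro!: AE_I2)
  have a0: "0 \<le> s / (s + lam)" using s l by simp
  have "(\<integral>\<^sup>+y. ennreal (s / (s + lam) * ((t + X y) * ln (t + X y))) \<partial>M)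
      \<le> (\<integral>\<^sup>+y. ennreal (s / (s + lam) * (t * ln t + B'^2 + X y * (ln t + 1))) \<partial>M)"
    using ln_bound[OF t1, of "X _" B'] Xb a0
    by (intro nn_integral_mono ennreal_leI mult_left_mono) (auto simp: algebra_simps)
  also have "\<dots> = ennreal (\<integral>y. s / (s + lam) * (t * ln t + B'^2 + X y * (ln t + 1)) \<partial>M)"
    using intX Xb a0 t1
    by (intro nn_integral_eq_integral AE_I2 mult_nonneg_nonneg) (auto intro!: add_nonneg_nonneg)
  also have "(\<integral>y. s / (s + lam) * (t * ln t + B'^2 + X y * (ln t + 1)) \<partial>M)
     = s / (s + lam) * (t * ln t + B'^2 + integral\<^sup>L M X * (ln t + 1))"
    using intX by (simp add: prob_space)
  also have "ennreal (s / (s + lam) * (t * ln t + B'^2 + integral\<^sup>L M X * (ln t + 1))) \<le> ennreal (t * ln t)"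
    using step_real_ineq[OF d l mX mX0 t s] by (rule ennreal_leI)
  finally show ?thesis .
qed

lemma lim_aux:
  fixes d c K :: real
  assumes "d > 0" "c > 1"
  shows "(\<lambda>n. real (Suc n) * K / ((c + d * real n) * ln (c + d * real n))) \<longlonglongrightarrow> 0"
  using assms by real_asymp

theorem claim2p13p1:
  fixes wstar lam :: real
    and \<mu> :: "real measure"
    and h :: "real \<Rightarrow> real"
    and g :: "real \<Rightarrow> real \<Rightarrow> real"
  assumes wstar_pos: "wstar > 0"
    and mu_prob: "prob_space \<mu>"
    and mu_sets: "sets \<mu> = sets (restrict_space borel {0..wstar})"
    and h_meas: "h \<in> borel_measurable (restrict_space borel {0..wstar})"
    and h_nonneg: "\<forall>x\<in>{0..wstar}. h x \<ge> 0"
    and h_bdd: "\<exists>B. \<forall>x\<in>{0..wstar}. h x \<le> B"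
    and g_meas: "(\<lambda>(x, y). g x y) \<in> borel_measurable (restrict_space borel ({0..wstar} \<times> {0..wstar}))"
    and g_nonneg: "\<forall>x\<in>{0..wstar}. \<forall>y\<in>{0..wstar}. g x y \<ge> 0"
    and g_bdd: "\<exists>B. \<forall>x\<in>{0..wstar}. \<forall>y\<in>{0..wstar}. g x y \<le> B"
    and gsup_meas: "(\<lambda>w. SUP x\<in>{0..wstar}. g x w) \<in> borel_measurable \<mu>"
    and C1_gt: "lam > gtilde_star \<mu> g wstar"
    and C1_eq: "(\<integral>w. h w / (lam - gtilde \<mu> g w) \<partial>\<mu>) = 1"
  shows "(\<lambda>k. real k * (\<integral>W'. (\<Prod>i<k. companion h g (W' 0) W' i
                     / (companion h g (W' 0) W' i + lam)) \<partial>(PiM {0..<k} (\<lambda>_. \<mu>))))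
           \<longlonglongrightarrow> 0"

proof -
  interpret prob_space \<mu> by (rule mu_prob)
  define I where "I = {0..wstar}"
  have spmu: "space \<mu> = I"
    using sets_eq_imp_space_eq[OF mu_sets] by (simp add: I_def space_restrict_space)
  obtain Bh where Bh: "\<forall>x\<in>I. h x \<le> Bh" using h_bdd I_def by auto
  obtain Bg where Bg: "\<forall>x\<in>I. \<forall>y\<in>I. g x y \<le> Bg" using g_bdd I_def by auto
  define B where "B = max (max Bh Bg) 1"
  have hB: "\<And>x. x \<in> I \<Longrightarrow> 0 \<le> h x \<and> h x \<le> B"
    using Bh h_nonneg I_def B_def by fastforce
  have gB: "\<And>x y. x \<in> I \<Longrightarrow> y \<in> I \<Longrightarrow> 0 \<le> g x y \<and> g x y \<le> B"
    using Bg g_nonneg I_def B_def by fastforce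
  have B0: "0 \<le> B" by (simp add: B_def)
  have idm: "(\<lambda>x. x) \<in> measurable \<mu> (borel::real measure)"
  proof -
    have "(\<lambda>x. x) \<in> measurable (restrict_space borel {0..wstar}) (borel::real measure)"
      by (rule measurable_restrict_space1, rule measurable_ident_sets) simp
    then show ?thesis by (simp only: measurable_cong_sets[OF mu_sets refl])
  qed
  have hm: "h \<in> borel_measurable \<mu>"
    using h_meas by (simp only: measurable_cong_sets[OF mu_sets refl])
  have comp: "\<And>(K::nat set) j. j \<in> K \<Longrightarrow> (\<lambda>x. x j) \<in> measurable (PiM K (\<lambda>_. \<mu>)) borel"
  proof -
    fix K :: "nat set" and j assume "j \<in> K"
    then have "(\<lambda>x. x j) \<in> measurable (PiM K (\<lambda>_. \<mu>)) \<mu>" by (rule measurable_component_singleton)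
    from measurable_comp[OF this idm] show "(\<lambda>x. x j) \<in> measurable (PiM K (\<lambda>_. \<mu>)) borel"
      by (simp add: comp_def)
  qed
  have spPi: "\<And>(K::nat set) x j. x \<in> space (PiM K (\<lambda>_. \<mu>)) \<Longrightarrow> j \<in> K \<Longrightarrow> x j \<in> I"
    by (auto simp: space_PiM PiE_iff spmu)
  have gPi: "\<And>(K::nat set) j. 0 \<in> K \<Longrightarrow> j \<in> K \<Longrightarrow> (\<lambda>x. g (x 0) (x j)) \<in> borel_measurable (PiM K (\<lambda>_. \<mu>))"
  proof -
    fix K j assume K: "(0::nat) \<in> K" "j \<in> K"
    have "(\<lambda>x. (x 0, x j)) \<in> measurable (PiM K (\<lambda>_. \<mu>)) (restrict_space borel (I \<times> I))"
    proof (rule measurable_restrict_space2)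
      show "(\<lambda>x. (x 0, x j)) \<in> space (PiM K (\<lambda>_. \<mu>)) \<rightarrow> I \<times> I" using spPi K by auto
      show "(\<lambda>x. (x 0, x j)) \<in> measurable (PiM K (\<lambda>_. \<mu>)) borel"
        unfolding borel_prod[symmetric] using comp K by (intro measurable_Pair) auto
    qed
    from measurable_comp[OF this g_meas[unfolded I_def[symmetric]]]
    show "(\<lambda>x. g (x 0) (x j)) \<in> borel_measurable (PiM K (\<lambda>_. \<mu>))" by (simp add: comp_def)
  qed
  have gsec: "\<And>w. w \<in> I \<Longrightarrow> g w \<in> borel_measurable \<mu>"
  proof -
    fix w assume w: "w \<in> I"
    have "(\<lambda>y. (w, y)) \<in> measurable \<mu> (restrict_space borel (I \<times> I))"
    proof (rule measurable_restrict_space2)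
      show "(\<lambda>y. (w, y)) \<in> space \<mu> \<rightarrow> I \<times> I" using w spmu by auto
      show "(\<lambda>y. (w, y)) \<in> measurable \<mu> borel"
        unfolding borel_prod[symmetric] using idm by (intro measurable_Pair) auto
    qed
    from measurable_comp[OF this g_meas[unfolded I_def[symmetric]]]
    show "g w \<in> borel_measurable \<mu>" by (simp add: comp_def)
  qed
  have gint: "\<And>w. w \<in> I \<Longrightarrow> integrable \<mu> (g w)"
    using gsec gB spmu by (intro integrable_const_bound[where B=B]) (auto intro!: AE_I2)
  define m where "m = gtilde_star \<mu> g wstar"
  have supb: "\<And>y. y \<in> I \<Longrightarrow> 0 \<le> (SUP x\<in>{0..wstar}. g x y) \<and> (SUP x\<in>{0..wstar}. g x y) \<le> B"
  proof -
    fix y assume y: "y \<in> I"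
    have ne: "{0..wstar} \<noteq> {}" using wstar_pos by simp
    have bdd: "bdd_above ((\<lambda>x. g x y) ` {0..wstar})" using gB y I_def by (auto intro!: bdd_aboveI[where M=B])
    have "g 0 y \<le> (SUP x\<in>{0..wstar}. g x y)" using wstar_pos bdd by (intro cSUP_upper) auto
    moreover have "0 \<le> g 0 y" using gB y I_def wstar_pos by auto
    moreover have "(SUP x\<in>{0..wstar}. g x y) \<le> B" using gB y I_def ne by (intro cSUP_least) auto
    ultimately show "0 \<le> (SUP x\<in>{0..wstar}. g x y) \<and> (SUP x\<in>{0..wstar}. g x y) \<le> B" by simp
  qed
  have supint: "integrable \<mu> (\<lambda>y. SUP x\<in>{0..wstar}. g x y)"
    using gsup_meas supb spmu by (intro integrable_const_bound[where B=B]) (auto intro!: AE_I2)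
  have m0: "0 \<le> m" unfolding m_def gtilde_star_def
    using supb spmu by (intro integral_nonneg_AE) (auto intro!: AE_I2)
  have gt_le: "\<And>w. w \<in> I \<Longrightarrow> gtilde \<mu> g w \<le> m"
    unfolding m_def gtilde_star_def gtilde_def
    using gint supint spmu
    by (intro integral_mono) (auto simp: I_def intro!: cSUP_upper bdd_aboveI[where M=B] dest: gB[unfolded I_def])
  define \<delta> where "\<delta> = (lam - m) / 2"
  have d0: "0 < \<delta>" using C1_gt m_def \<delta>_def by simp
  have lam0: "0 < lam" using C1_gt m_def m0 by simp
  define B' where "B' = B + \<delta>"
  define c where "c = exp ((lam + B'^2) / \<delta>)"
  have c1: "1 < c" unfolding c_def using d0 lam0 by (simp add: add_pos_nonneg)
  define f where "f = (\<lambda>v::real. v / (v + lam))"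
  define \<psi> where "\<psi> = (\<lambda>v::real. v * ln v)"
  define S where "S = (\<lambda>x i. companion h g (x (0::nat)) x i)"
  define Y where "Y = (\<lambda>n x. (\<Prod>j<n. f (S x j)) * \<psi> (S x n + c + \<delta> * real n))"
  have f01: "\<And>v. 0 \<le> v \<Longrightarrow> 0 \<le> f v \<and> f v \<le> 1"
    unfolding f_def using lam0 by auto
  have Sm: "\<And>(K::nat set) i. 0 \<in> K \<Longrightarrow> {1..i} \<subseteq> K \<Longrightarrow> (\<lambda>x. S x i) \<in> borel_measurable (PiM K (\<lambda>_. \<mu>))"
  proof -
    fix K i assume K: "(0::nat) \<in> K" "{1..i} \<subseteq> K"
    have h0: "(\<lambda>x. h (x 0)) \<in> borel_measurable (PiM K (\<lambda>_. \<mu>))"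
      using measurable_comp[OF measurable_component_singleton[OF K(1)] hm] by (simp add: comp_def)
    show "(\<lambda>x. S x i) \<in> borel_measurable (PiM K (\<lambda>_. \<mu>))"
      unfolding S_def companion_def
      using K by (intro borel_measurable_add h0 borel_measurable_sum gPi) auto
  qed
  have S0: "\<And>(K::nat set) x i. x \<in> space (PiM K (\<lambda>_. \<mu>)) \<Longrightarrow> 0 \<in> K \<Longrightarrow> {1..i} \<subseteq> K \<Longrightarrow> 0 \<le> S x i"
  proof -
    fix K x i assume x: "x \<in> space (PiM K (\<lambda>_. \<mu>))" and K: "(0::nat) \<in> K" "{1..i} \<subseteq> K"
    have "0 \<le> h (x 0)" using hB spPi[OF x K(1)] by simp
    moreover have "0 \<le> (\<Sum>j\<in>{1..i}. g (x 0) (x j))"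
      using gB spPi[OF x K(1)] spPi[OF x] K(2) by (intro sum_nonneg) auto
    ultimately show "0 \<le> S x i" unfolding S_def companion_def by simp
  qed
  have Ym: "\<And>n. (\<lambda>x. Y n x) \<in> borel_measurable (PiM {0..<Suc n} (\<lambda>_. \<mu>))"
  proof -
    fix n
    have "\<And>j. j \<le> n \<Longrightarrow> (\<lambda>x. S x j) \<in> borel_measurable (PiM {0..<Suc n} (\<lambda>_. \<mu>))"
      by (intro Sm) auto
    then show "(\<lambda>x. Y n x) \<in> borel_measurable (PiM {0..<Suc n} (\<lambda>_. \<mu>))"
      unfolding Y_def f_def \<psi>_def
      by (intro borel_measurable_times borel_measurable_prod borel_measurable_divide
          borel_measurable_add borel_measurable_ln borel_measurable_const) auto
  qed
  interpret PS: product_sigma_finite "\<lambda>_::nat. \<mu>"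
    by standard
  have PiP: "\<And>K. prob_space (PiM K (\<lambda>_::nat. \<mu>))"
    by (rule prob_space_PiM) (rule mu_prob)
  have dn: "\<And>n. 0 \<le> \<delta> * real n" using d0 by simp
  have psi_c: "\<And>v. c \<le> v \<Longrightarrow> 0 < \<psi> v"
    unfolding \<psi>_def using c1 by (auto intro!: mult_pos_pos)
  have claim: "\<And>n. (\<integral>\<^sup>+x. ennreal (Y n x) \<partial>PiM {0..<Suc n} (\<lambda>_. \<mu>)) \<le> ennreal (\<psi> (B + c))"
  proof -
    fix n show "(\<integral>\<^sup>+x. ennreal (Y n x) \<partial>PiM {0..<Suc n} (\<lambda>_. \<mu>)) \<le> ennreal (\<psi> (B + c))"
    proof (induction n)
      case 0
      have "(\<integral>\<^sup>+x. ennreal (Y 0 x) \<partial>PiM {0..<Suc 0} (\<lambda>_. \<mu>))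
          \<le> (\<integral>\<^sup>+x. ennreal (\<psi> (B + c)) \<partial>PiM {0..<Suc 0} (\<lambda>_. \<mu>))"
      proof (rule nn_integral_mono)
        fix x assume x: "x \<in> space (PiM {0..<Suc 0} (\<lambda>_. \<mu>))"
        have "h (x 0) \<le> B" "0 \<le> h (x 0)" using hB spPi[OF x] by auto
        then show "ennreal (Y 0 x) \<le> ennreal (\<psi> (B + c))"
          unfolding Y_def S_def companion_def \<psi>_def using c1
          by (intro ennreal_leI) (simp add: psi_mono)
      qed
      also have "\<dots> = ennreal (\<psi> (B + c))"
        using prob_space.emeasure_space_1[OF PiP] by simp
      finally show ?case .
    next
      case (Suc n)
      let ?P = "PiM {0..<Suc n} (\<lambda>_::nat. \<mu>)"
      have ins: "{0..<Suc (Suc n)} = insert (Suc n) {0..<Suc n}" by auto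
      have "(\<integral>\<^sup>+x. ennreal (Y (Suc n) x) \<partial>PiM {0..<Suc (Suc n)} (\<lambda>_. \<mu>))
          = (\<integral>\<^sup>+x. (\<integral>\<^sup>+y. ennreal (Y (Suc n) (x(Suc n := y))) \<partial>\<mu>) \<partial>?P)"
        unfolding ins
        using measurable_compose[OF Ym[of "Suc n", unfolded ins] measurable_ennreal]
        by (intro PS.product_nn_integral_insert) auto
      also have "\<dots> \<le> (\<integral>\<^sup>+x. ennreal (Y n x) \<partial>?P)"
      proof (rule nn_integral_mono)
        fix x assume x: "x \<in> space ?P"
        have x0: "x 0 \<in> I" using spPi[OF x] by simp
        have Sx: "\<And>j y. j \<le> n \<Longrightarrow> S (x(Suc n := y)) j = S x j"
          unfolding S_def companion_def by (intro arg_cong2[where f="(+)"] sum.cong) auto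
        have SxS: "\<And>y. S (x(Suc n := y)) (Suc n) = S x n + g (x 0) y"
          unfolding S_def companion_def by (simp add: sum.cl_ivl_Suc Sx[unfolded S_def companion_def])
        define P where "P = (\<Prod>j<n. f (S x j))"
        define t where "t = S x n + c + \<delta> * real n"
        have Sj: "\<And>j. j \<le> n \<Longrightarrow> 0 \<le> S x j" by (rule S0[OF x]) auto
        have Sxn: "0 \<le> S x n" using Sj by simp
        have P0: "0 \<le> P" unfolding P_def using f01 Sj by (intro prod_nonneg) auto
        have eq: "\<And>y. Y (Suc n) (x(Suc n := y)) = P * (f (S x n) * \<psi> (t + (g (x 0) y + \<delta>)))"
          unfolding Y_def P_def t_def using Sx SxS by (simp add: algebra_simps)
        have "(\<integral>\<^sup>+y. ennreal (Y (Suc n) (x(Suc n := y))) \<partial>\<mu>)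
            = (\<integral>\<^sup>+y. ennreal P * ennreal (f (S x n) * \<psi> (t + (g (x 0) y + \<delta>))) \<partial>\<mu>)"
          unfolding eq using P0 by (intro nn_integral_cong) (simp add: ennreal_mult')
        also have "\<dots> = ennreal P * (\<integral>\<^sup>+y. ennreal (f (S x n) * \<psi> (t + (g (x 0) y + \<delta>))) \<partial>\<mu>)"
          unfolding f_def \<psi>_def
          by (intro nn_integral_cmult measurable_compose[OF _ measurable_ennreal] borel_measurable_times
              borel_measurable_add borel_measurable_ln borel_measurable_divide borel_measurable_const gsec[OF x0])
        also have "(\<integral>\<^sup>+y. ennreal (f (S x n) * \<psi> (t + (g (x 0) y + \<delta>))) \<partial>\<mu>) \<le> ennreal (\<psi> t)"
          unfolding f_def \<psi>_def
        proof (rule step_nn[where B'=B'])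
          show "prob_space \<mu>" by (rule mu_prob)
          show "(\<lambda>y. g (x 0) y + \<delta>) \<in> borel_measurable \<mu>" by (intro borel_measurable_add borel_measurable_const gsec[OF x0])
          show "\<And>y. y \<in> space \<mu> \<Longrightarrow> 0 \<le> g (x 0) y + \<delta> \<and> g (x 0) y + \<delta> \<le> B'"
            using gB x0 spmu d0 B'_def by fastforce
          have "(\<integral>y. g (x 0) y + \<delta> \<partial>\<mu>) = gtilde \<mu> g (x 0) + \<delta>"
            unfolding gtilde_def using gint[OF x0] by (simp add: prob_space)
          then show "(\<integral>y. g (x 0) y + \<delta> \<partial>\<mu>) \<le> lam - \<delta>"
            using gt_le[OF x0] unfolding \<delta>_def by (simp add: field_simps)
          show "0 < \<delta>" "0 < lam" by (fact d0, fact lam0)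
          show "exp ((lam + B'^2) / \<delta>) \<le> t" "0 \<le> S x n" "S x n \<le> t"
            unfolding t_def c_def[symmetric] using Sxn c1 d0 by auto
        qed
        also have "ennreal P * ennreal (\<psi> t) = ennreal (Y n x)"
          using ennreal_mult'[OF P0, of "\<psi> t", symmetric] unfolding Y_def P_def t_def by simp
        finally show "(\<integral>\<^sup>+y. ennreal (Y (Suc n) (x(Suc n := y))) \<partial>\<mu>) \<le> ennreal (Y n x)"
          by (simp add: mult_left_mono)
      qed
      also have "\<dots> \<le> ennreal (\<psi> (B + c))" by (rule Suc.IH)
      finally show ?case .
    qed
  qed
  have bound: "\<And>n. \<psi> (c + \<delta> * real n) * (\<integral>x. (\<Prod>i<Suc n. f (S x i)) \<partial>PiM {0..<Suc n} (\<lambda>_. \<mu>)) \<le> \<psi> (B + c)"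
  proof -
    fix n
    let ?P = "PiM {0..<Suc n} (\<lambda>_::nat. \<mu>)"
    have pc: "0 < \<psi> (c + \<delta> * real n)" using d0 by (intro psi_c) simp
    have Fm: "(\<lambda>x. \<psi> (c + \<delta> * real n) * (\<Prod>i<Suc n. f (S x i))) \<in> borel_measurable ?P"
    proof -
      have "\<And>j. j \<le> n \<Longrightarrow> (\<lambda>x. S x j) \<in> borel_measurable ?P" by (intro Sm) auto
      then show ?thesis unfolding f_def
        by (intro borel_measurable_times borel_measurable_prod borel_measurable_divide
          borel_measurable_add borel_measurable_const) auto
    qed
    have Fpos: "\<And>x. x \<in> space ?P \<Longrightarrow> 0 \<le> \<psi> (c + \<delta> * real n) * (\<Prod>i<Suc n. f (S x i))"
    proof -
      fix x assume x: "x \<in> space ?P"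
      have "\<And>j. j < Suc n \<Longrightarrow> 0 \<le> S x j" by (rule S0[OF x]) auto
      then show "0 \<le> \<psi> (c + \<delta> * real n) * (\<Prod>i<Suc n. f (S x i))"
        using pc f01 by (intro mult_nonneg_nonneg prod_nonneg) (auto simp del: prod.lessThan_Suc)
    qed
    have le: "(\<integral>\<^sup>+x. ennreal (\<psi> (c + \<delta> * real n) * (\<Prod>i<Suc n. f (S x i))) \<partial>?P) \<le> ennreal (\<psi> (B + c))"
    proof -
      have "(\<integral>\<^sup>+x. ennreal (\<psi> (c + \<delta> * real n) * (\<Prod>i<Suc n. f (S x i))) \<partial>?P) \<le> (\<integral>\<^sup>+x. ennreal (Y n x) \<partial>?P)"
      proof (rule nn_integral_mono, rule ennreal_leI)
        fix x assume x: "x \<in> space ?P"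
        have Sj: "\<And>j. j \<le> n \<Longrightarrow> 0 \<le> S x j" by (rule S0[OF x]) auto
        have P0: "0 \<le> (\<Prod>j<n. f (S x j))" using f01 Sj by (intro prod_nonneg) auto
        have A1: "(\<Prod>i<Suc n. f (S x i)) \<le> (\<Prod>j<n. f (S x j))"
          using f01[OF Sj[of n]] P0 by (simp add: mult_left_le)
        have A2: "\<psi> (c + \<delta> * real n) \<le> \<psi> (S x n + c + \<delta> * real n)"
          proof -
          have "1 \<le> c + \<delta> * real n" using c1 dn[of n] by linarith
          then show ?thesis unfolding \<psi>_def using Sj[of n] by (intro psi_mono) auto
        qed
        have A3: "0 \<le> (\<Prod>i<Suc n. f (S x i))" using f01 Sj
          by (intro prod_nonneg) (auto simp del: prod.lessThan_Suc)
        have "\<psi> (c + \<delta> * real n) * (\<Prod>i<Suc n. f (S x i)) \<le> \<psi> (S x n + c + \<delta> * real n) * (\<Prod>j<n. f (S x j))"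
          by (rule mult_mono[OF A2 A1 _ A3]) (use pc A2 in linarith)
        then show "\<psi> (c + \<delta> * real n) * (\<Prod>i<Suc n. f (S x i)) \<le> Y n x"
          unfolding Y_def by (simp only: mult.commute)
      qed
      also have "\<dots> \<le> ennreal (\<psi> (B + c))" by (rule claim)
      finally show ?thesis .
    qed
    have "\<psi> (c + \<delta> * real n) * (\<integral>x. (\<Prod>i<Suc n. f (S x i)) \<partial>?P)
        = (\<integral>x. \<psi> (c + \<delta> * real n) * (\<Prod>i<Suc n. f (S x i)) \<partial>?P)" by simp
    also have "\<dots> = enn2real (\<integral>\<^sup>+x. ennreal (\<psi> (c + \<delta> * real n) * (\<Prod>i<Suc n. f (S x i))) \<partial>?P)"
      using Fm Fpos by (intro integral_eq_nn_integral AE_I2) auto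
    also have "\<dots> \<le> enn2real (ennreal (\<psi> (B + c)))"
      using le by (intro enn2real_mono) auto
    also have "\<dots> \<le> \<psi> (B + c)" using psi_c[of "B + c"] B0 by simp
    finally show "\<psi> (c + \<delta> * real n) * (\<integral>x. (\<Prod>i<Suc n. f (S x i)) \<partial>?P) \<le> \<psi> (B + c)" .
  qed
  define E where "E = (\<lambda>k. (\<integral>x. (\<Prod>i<k. f (S x i)) \<partial>PiM {0..<k} (\<lambda>_::nat. \<mu>)))"
  have E0: "\<And>k. 0 \<le> E k"
    unfolding E_def
  proof (intro integral_nonneg_AE AE_I2 impI prod_nonneg)
    fix k x i assume x: "x \<in> space (PiM {0..<k} (\<lambda>_::nat. \<mu>))" and i: "i \<in> {..<k}"
    have "0 \<le> S x i" by (rule S0[OF x]) (use i in auto)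
    then show "0 \<le> f (S x i)" using f01 by simp
  qed
  have Ebd: "\<And>n. real (Suc n) * E (Suc n) \<le> real (Suc n) * \<psi> (B + c) / \<psi> (c + \<delta> * real n)"
  proof -
    fix n
    have pc: "0 < \<psi> (c + \<delta> * real n)" using d0 by (intro psi_c) simp
    have Eq: "E (Suc n) \<le> \<psi> (B + c) / \<psi> (c + \<delta> * real n)"
      using bound[of n] pc unfolding E_def by (simp add: field_simps)
    then show "real (Suc n) * E (Suc n) \<le> real (Suc n) * \<psi> (B + c) / \<psi> (c + \<delta> * real n)"
      using mult_left_mono[OF Eq, of "real (Suc n)"] by simp
  qed
  have lim: "(\<lambda>n. real (Suc n) * \<psi> (B + c) / \<psi> (c + \<delta> * real n)) \<longlonglongrightarrow> 0"
    unfolding \<psi>_def using d0 c1 by (rule lim_aux)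
  have "(\<lambda>n. real (Suc n) * E (Suc n)) \<longlonglongrightarrow> 0"
    apply (rule tendsto_sandwich[OF _ _ tendsto_const lim])
     apply (rule always_eventually, rule allI, rule mult_nonneg_nonneg, simp, rule E0)
    apply (rule always_eventually, rule allI, rule Ebd)
    done
  then have "(\<lambda>k. real k * E k) \<longlonglongrightarrow> 0"
    by (rule LIMSEQ_imp_Suc)
  then show ?thesis unfolding E_def f_def S_def .
qed

end
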